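(* Let $m\ge 38$ be even and let $G$ be a graph with maximum spectral radius among all $H(4,3)$-free graphs with $m$ edges and no isolated vertices. Let $\mathbf{x}$ be the Perron vector of $G$, $u^*$ a vertex maximizing $x_{u^*}$, $N = N(u^* )$, and $A_+ = \{v\in N : d_N(v)\ge 1\}$. Then $A_+\neq\emptyset$, i.e. $N(u^* )$ spans at least one edge.
   Context: All graphs are simple and undirected; $\rho(G)$ is the largest adjacency eigenvalue and the Perron vector is the positive unit eigenvector for $\rho(G)$ (the extremal $G$ is connected). $H(4,3)$ is the graph formed by a cycle of length $4$ and a triangle sharing exactly one common vertex. $N(v)$ denotes the neighbourhood of $v$ and $d_S(v)=|N(v)\cap S|$. *)

theory Defs
  imports Complex_Main
begin

definition simple_graph :: "'a set \<Rightarrow> 'a set set \<Rightarrow> bool" where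
  "simple_graph V E \<longleftrightarrow> finite V \<and>
     (\<forall>e\<in>E. \<exists>u v. e = {u, v} \<and> u \<noteq> v \<and> u \<in> V \<and> v \<in> V)"

definition no_isolated :: "'a set \<Rightarrow> 'a set set \<Rightarrow> bool" where
  "no_isolated V E \<longleftrightarrow> (\<forall>v\<in>V. \<exists>u. {u, v} \<in> E)"

definition nbhd :: "'a set \<Rightarrow> 'a set set \<Rightarrow> 'a \<Rightarrow> 'a set" where
  "nbhd V E v = {u \<in> V. {v, u} \<in> E}"

definition adj_eigvec :: "'a set \<Rightarrow> 'a set set \<Rightarrow> real \<Rightarrow> ('a \<Rightarrow> real) \<Rightarrow> bool" where
  "adj_eigvec V E lam x \<longleftrightarrow>
     (\<forall>v\<in>V. (\<Sum>u\<in>V. if {v, u} \<in> E then x u else 0) = lam * x v) \<and>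
     (\<exists>v\<in>V. x v \<noteq> 0)"

definition spectral_radius :: "'a set \<Rightarrow> 'a set set \<Rightarrow> real" where
  "spectral_radius V E = Max {lam. \<exists>x. adj_eigvec V E lam x}"

definition perron_vector :: "'a set \<Rightarrow> 'a set set \<Rightarrow> ('a \<Rightarrow> real) \<Rightarrow> bool" where
  "perron_vector V E x \<longleftrightarrow> adj_eigvec V E (spectral_radius V E) x \<and>
     (\<forall>v\<in>V. x v > 0) \<and> (\<Sum>v\<in>V. (x v)\<^sup>2) = 1"

definition H43_free :: "'a set \<Rightarrow> 'a set set \<Rightarrow> bool" where
  "H43_free V E \<longleftrightarrow> \<not> (\<exists>c a1 a2 a3 b1 b2.
      distinct [c, a1, a2, a3, b1, b2] \<and> set [c, a1, a2, a3, b1, b2] \<subseteq> V \<and>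
      {c, a1} \<in> E \<and> {a1, a2} \<in> E \<and> {a2, a3} \<in> E \<and> {a3, c} \<in> E \<and>
      {c, b1} \<in> E \<and> {b1, b2} \<in> E \<and> {b2, c} \<in> E)"

end

theory Submission
  imports Defs "Jordan_Normal_Form.Char_Poly"
begin


lemma eig_finite:
  fixes V :: "nat set" and E :: "nat set set"
  assumes fin: "finite V"
  shows "finite {lam. \<exists>x. adj_eigvec V E lam x}"
proof -
  define vs where "vs = sorted_list_of_set V"
  define n where "n = length vs"
  have dist: "distinct vs" and setvs: "set vs = V" using fin by (auto simp: vs_def)
  define A :: "real mat" where "A = mat n n (\<lambda>(i,j). if {vs!i, vs!j} \<in> E then 1 else 0)"
  have Ac: "A \<in> carrier_mat n n" by (simp add: A_def)
  have sub: "{lam. \<exists>x. adj_eigvec V E lam x} \<subseteq> {k. poly (char_poly A) k = 0}"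
  proof
    fix lam assume "lam \<in> {lam. \<exists>x. adj_eigvec V E lam x}"
    then obtain x where ev: "adj_eigvec V E lam x" by auto
    define v where "v = vec n (\<lambda>i. x (vs!i))"
    have reidx: "(\<Sum>j\<in>{0..<n}. f (vs!j)) = (\<Sum>u\<in>V. f u)" for f :: "nat \<Rightarrow> real"
    proof -
      have "inj_on (nth vs) {0..<n}" using dist by (simp add: inj_on_nth n_def)
      moreover have "nth vs ` {0..<n} = V" using setvs by (auto simp: n_def in_set_conv_nth)
      ultimately show ?thesis using sum.reindex[of "nth vs" "{0..<n}" f] by simp
    qed
    have "A *\<^sub>v v = lam \<cdot>\<^sub>v v"
    proof (rule eq_vecI)
      fix i assume "i < dim_vec (lam \<cdot>\<^sub>v v)"
      hence i: "i < n" by (simp add: v_def)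
      hence viV: "vs!i \<in> V" using setvs n_def by auto
      have "(A *\<^sub>v v) $ i = (\<Sum>j\<in>{0..<n}. (if {vs!i, vs!j} \<in> E then x (vs!j) else 0))"
        using i by (auto simp: A_def v_def scalar_prod_def row_def intro!: sum.cong)
      also have "\<dots> = (\<Sum>u\<in>V. if {vs!i, u} \<in> E then x u else 0)" by (rule reidx)
      also have "\<dots> = lam * x (vs!i)" using ev viV unfolding adj_eigvec_def by blast
      finally show "(A *\<^sub>v v) $ i = (lam \<cdot>\<^sub>v v) $ i" using i by (simp add: v_def)
    qed (simp add: A_def v_def)
    moreover have "v \<noteq> 0\<^sub>v n"
    proof
      assume z: "v = 0\<^sub>v n"
      obtain u where "u \<in> V" "x u \<noteq> 0" using ev unfolding adj_eigvec_def by blast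
      then obtain i where "i < n" "vs!i = u" using setvs by (auto simp: n_def in_set_conv_nth)
      hence "v $ i \<noteq> 0" using \<open>x u \<noteq> 0\<close> by (simp add: v_def)
      thus False using z \<open>i < n\<close> by simp
    qed
    ultimately have "eigenvector A v lam" unfolding eigenvector_def using Ac by (auto simp: v_def)
    hence "eigenvalue A lam" unfolding eigenvalue_def by auto
    thus "lam \<in> {k. poly (char_poly A) k = 0}" using eigenvalue_root_char_poly[OF Ac] by auto
  qed
  have "coeff (char_poly A) n = 1" using degree_monic_char_poly[OF Ac] by auto
  hence "char_poly A \<noteq> 0" by auto
  from poly_roots_finite[OF this] show ?thesis using finite_subset[OF sub] by blast
qed



definition Pb :: "nat \<Rightarrow> nat \<Rightarrow> nat \<Rightarrow> bool" where
  "Pb k a b \<longleftrightarrow> (a = 0 \<and> b = 1) \<or> (a \<le> 1 \<and> 2 \<le> b \<and> b \<le> k+1) \<or> (a = k+2 \<and> b = k+3)"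

definition fb :: "nat \<Rightarrow> nat \<Rightarrow> nat set" where
  "fb k j = (if j = 0 then {0,1} else if j \<le> k then {0, j+1} else if j \<le> 2*k then {1, j-k+1} else {k+2,k+3})"

definition Eb :: "nat \<Rightarrow> nat set set" where "Eb k = fb k ` {..<2*k+2}"

lemma memEb1: assumes "Pb k a b" shows "\<exists>j<2*k+2. {a,b} = fb k j"
proof -
  have "(a = 0 \<and> b = 1) \<or> (a = 0 \<and> 2 \<le> b \<and> b \<le> k+1) \<or> (a = 1 \<and> 2 \<le> b \<and> b \<le> k+1) \<or> (a = k+2 \<and> b = k+3)"
    using assms unfolding Pb_def by auto
  thus ?thesis
  proof (elim disjE conjE)
    show ?thesis if "a = 0" "b = 1" using that by (intro exI[of _ 0]) (auto simp: fb_def)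
    show ?thesis if "a = k+2" "b = k+3" using that by (intro exI[of _ "2*k+1"]) (auto simp: fb_def)
    show ?thesis if "a = 0" "2 \<le> b" "b \<le> k+1" using that by (intro exI[of _ "b - 1"]) (auto simp: fb_def)
    show ?thesis if "a = 1" "2 \<le> b" "b \<le> k+1" using that by (intro exI[of _ "b + k - 1"]) (auto simp: fb_def)
  qed
qed

lemma memEb: "{a,b} \<in> Eb k \<longleftrightarrow> Pb k a b \<or> Pb k b a"
proof
  assume "{a,b} \<in> Eb k"
  then obtain j where j: "j < 2*k+2" "{a,b} = fb k j" unfolding Eb_def by auto
  then show "Pb k a b \<or> Pb k b a" unfolding fb_def Pb_def
    by (auto simp: doubleton_eq_iff split: if_splits)
next
  assume "Pb k a b \<or> Pb k b a"
  then have "\<exists>j<2*k+2. {a,b} = fb k j"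
    using memEb1[of k a b] memEb1[of k b a] by (auto simp: insert_commute)
  then show "{a,b} \<in> Eb k" unfolding Eb_def by auto
qed

lemma card_Eb: "card (Eb k) = 2*k+2"
proof -
  have "inj_on (fb k) {..<2*k+2}"
    unfolding inj_on_def fb_def by (auto simp: doubleton_eq_iff split: if_splits)
  thus ?thesis unfolding Eb_def by (simp add: card_image)
qed

lemma simple_Eb: "simple_graph {..k+3} (Eb k)"
  unfolding simple_graph_def
proof (intro conjI ballI)
  fix e assume "e \<in> Eb k"
  then obtain j where j: "j < 2*k+2" "e = fb k j" unfolding Eb_def by auto
  show "\<exists>u v. e = {u, v} \<and> u \<noteq> v \<and> u \<in> {..k+3} \<and> v \<in> {..k+3}"
  proof (cases "j = 0")
    case True thus ?thesis using j by (intro exI[of _ 0] exI[of _ 1]) (simp add: fb_def)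
  next
    case F1: False show ?thesis
    proof (cases "j \<le> k")
      case True thus ?thesis using j F1 by (intro exI[of _ 0] exI[of _ "j+1"]) (simp add: fb_def)
    next
      case F2: False show ?thesis
      proof (cases "j \<le> 2*k")
        case True thus ?thesis using j F1 F2 by (intro exI[of _ 1] exI[of _ "j-k+1"]) (simp add: fb_def)
      next
        case False thus ?thesis using j F1 F2 by (intro exI[of _ "k+2"] exI[of _ "k+3"]) (simp add: fb_def)
      qed
    qed
  qed
qed simp

lemma noiso_Eb: "no_isolated {..k+3} (Eb k)"
  unfolding no_isolated_def
proof
  fix v assume "v \<in> {..k+3}"
  hence "v = 0 \<or> v = 1 \<or> (2 \<le> v \<and> v \<le> k+1) \<or> v = k+2 \<or> v = k+3" by auto
  thus "\<exists>u. {u, v} \<in> Eb k"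
  proof (elim disjE)
    assume "v = 0" thus ?thesis by (intro exI[of _ 1]) (simp add: memEb Pb_def)
  next
    assume "v = 1" thus ?thesis by (intro exI[of _ 0]) (simp add: memEb Pb_def)
  next
    assume "2 \<le> v \<and> v \<le> k+1" thus ?thesis by (intro exI[of _ 0]) (simp add: memEb Pb_def)
  next
    assume "v = k+2" thus ?thesis by (intro exI[of _ "k+3"]) (simp add: memEb Pb_def)
  next
    assume "v = k+3" thus ?thesis by (intro exI[of _ "k+2"]) (simp add: memEb Pb_def)
  qed
qed

lemma Qhi: "Pb k a b \<or> Pb k b a \<Longrightarrow> \<not> a \<le> 1 \<Longrightarrow>
   (2 \<le> a \<and> a \<le> k+1 \<and> (b = 0 \<or> b = 1)) \<or> (a \<ge> k+2 \<and> (b = k+2 \<or> b = k+3))"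
  unfolding Pb_def by auto

lemma Qlo: "Pb k a b \<or> Pb k b a \<Longrightarrow> a \<le> 1 \<Longrightarrow> b = 0 \<or> b = 1 \<or> (2 \<le> b \<and> b \<le> k+1)"
  unfolding Pb_def by auto

lemma Qpage: "Pb k a b \<or> Pb k b a \<Longrightarrow> 2 \<le> a \<Longrightarrow> a \<le> k+1 \<Longrightarrow> b = 0 \<or> b = 1"
  unfolding Pb_def by auto

lemma h43_Eb: "H43_free {..k+3} (Eb k)"
  unfolding H43_free_def
proof (clarify)
  fix c a1 a2 a3 b1 b2
  assume d: "distinct [c, a1, a2, a3, b1, b2]"
    and e1: "{c, a1} \<in> Eb k" and e2: "{a1, a2} \<in> Eb k" and e3: "{a2, a3} \<in> Eb k"
    and e4: "{a3, c} \<in> Eb k" and e5: "{c, b1} \<in> Eb k" and e6: "{b1, b2} \<in> Eb k" and e7: "{b2, c} \<in> Eb k"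
  have q1: "Pb k c a1 \<or> Pb k a1 c" using e1 memEb by blast
  have q2: "Pb k a1 a2 \<or> Pb k a2 a1" using e2 memEb by blast
  have q4: "Pb k c a3 \<or> Pb k a3 c" using e4 memEb by blast
  have q5: "Pb k c b1 \<or> Pb k b1 c" using e5 memEb by blast
  have q6: "Pb k b1 b2 \<or> Pb k b2 b1" using e6 memEb by blast
  have q7: "Pb k c b2 \<or> Pb k b2 c" using e7 memEb by blast
  have c1: "c \<le> 1"
  proof (rule ccontr)
    assume n: "\<not> c \<le> 1"
    have "(2 \<le> c \<and> c \<le> k+1) \<or> c \<ge> k+2" using n by auto
    thus False
    proof
      assume "2 \<le> c \<and> c \<le> k+1"
      hence "a1 \<in> {0,1}" "a3 \<in> {0,1}" "b1 \<in> {0,1}" using Qpage[OF q1] Qpage[OF q4] Qpage[OF q5] by auto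
      thus False using d by auto
    next
      assume h: "c \<ge> k+2"
      hence "a1 \<in> {k+2,k+3}" "a3 \<in> {k+2,k+3}" "b1 \<in> {k+2,k+3}" using Qhi[OF q1 n] Qhi[OF q4 n] Qhi[OF q5 n] by auto
      thus False using d by auto
    qed
  qed
  have hb: "b1 \<in> {0,1} \<or> b2 \<in> {0,1}"
  proof (rule ccontr)
    assume "\<not> ?thesis"
    hence "2 \<le> b1 \<and> b1 \<le> k+1" "b2 \<notin> {0,1}" using Qlo[OF q5 c1] Qlo[OF q7 c1] by auto
    thus False using Qpage[OF q6] by auto
  qed
  have "c \<in> {0,1}" using c1 by auto
  hence a1n: "a1 \<notin> {0,1}" using hb d by auto
  have a1p: "2 \<le> a1 \<and> a1 \<le> k+1" using Qlo[OF q1 c1] a1n by auto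
  have "a2 \<in> {0,1}" using Qpage[OF q2] a1p by auto
  thus False using hb d \<open>c \<in> {0,1}\<close> by auto
qed



definition lamb :: "nat \<Rightarrow> real" where "lamb k = (1 + sqrt (8 * real k + 1)) / 2"

lemma lamb_facts: assumes "k \<ge> 2" shows "lamb k > 2" "(lamb k)^2 = lamb k + 2 * real k"
proof -
  define s where "s = sqrt (8 * real k + 1)"
  have s2: "s^2 = 8 * real k + 1" unfolding s_def by simp
  have "sqrt 9 < s" unfolding s_def using assms by (subst real_sqrt_less_iff) simp
  hence s3: "s > 3" by simp
  show "lamb k > 2" unfolding lamb_def s_def[symmetric] using s3 by simp
  show "(lamb k)^2 = lamb k + 2 * real k" unfolding lamb_def s_def[symmetric]
    using s2 by (simp add: power2_eq_square field_simps)
qed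

definition yb :: "nat \<Rightarrow> nat \<Rightarrow> real" where
  "yb k u = (if u \<le> 1 then 1 else if u \<le> k+1 then 2 / lamb k else 0)"

lemma book_eig: assumes k: "k \<ge> 2" shows "adj_eigvec {..k+3} (Eb k) (lamb k) (yb k)"
  unfolding adj_eigvec_def
proof (intro conjI ballI)
  have l2: "lamb k > 2" and lsq: "(lamb k)^2 = lamb k + 2 * real k" using lamb_facts[OF k] by auto
  fix v assume v: "v \<in> {..k+3}"
  have "(\<Sum>u\<in>{..k+3}. if {v, u} \<in> Eb k then yb k u else 0) = (\<Sum>u\<in>{u\<in>{..k+3}. {v,u} \<in> Eb k}. yb k u)"
    by (rule sum.inter_filter[symmetric]) simp
  also have "\<dots> = lamb k * yb k v"
  proof -
    have "v \<le> 1 \<or> (2 \<le> v \<and> v \<le> k+1) \<or> v = k+2 \<or> v = k+3" using v by auto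
    thus ?thesis
    proof (elim disjE)
      assume v1: "v \<le> 1"
      have N: "{u\<in>{..k+3}. {v,u} \<in> Eb k} = insert (1-v) {2..k+1}"
        using v1 by (auto simp: memEb Pb_def)
      have "(\<Sum>u\<in>{2..k+1}. yb k u) = (\<Sum>u\<in>{2..k+1}. 2 / lamb k)"
        by (rule sum.cong) (auto simp: yb_def)
      also have "\<dots> = real k * (2 / lamb k)" by simp
      finally have S: "(\<Sum>u\<in>{2..k+1}. yb k u) = real k * (2 / lamb k)" .
      have "(\<Sum>u\<in>{u\<in>{..k+3}. {v,u} \<in> Eb k}. yb k u) = 1 + real k * (2 / lamb k)"
        unfolding N using v1 S by (simp add: yb_def)
      also have "\<dots> = lamb k" using l2 lsq by (simp add: field_simps power2_eq_square)
      finally show ?thesis using v1 by (simp add: yb_def)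
    next
      assume v1: "2 \<le> v \<and> v \<le> k+1"
      have N: "{u\<in>{..k+3}. {v,u} \<in> Eb k} = {0,1}"
        using v1 by (auto simp: memEb Pb_def)
      show ?thesis unfolding N using v1 l2 by (simp add: yb_def)
    next
      assume v1: "v = k+2"
      have N: "{u\<in>{..k+3}. {v,u} \<in> Eb k} = {k+3}"
        using v1 by (auto simp: memEb Pb_def)
      show ?thesis unfolding N using v1 by (simp add: yb_def)
    next
      assume v1: "v = k+3"
      have N: "{u\<in>{..k+3}. {v,u} \<in> Eb k} = {k+2}"
        using v1 by (auto simp: memEb Pb_def)
      show ?thesis unfolding N using v1 by (simp add: yb_def)
    qed
  qed
  finally show "(\<Sum>u\<in>{..k+3}. if {v, u} \<in> Eb k then yb k u else 0) = lamb k * yb k v" .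
next
  show "\<exists>v\<in>{..k+3}. yb k v \<noteq> 0" by (intro bexI[of _ 0]) (auto simp: yb_def)
qed

lemma book_rho: assumes k: "k \<ge> 2" shows "spectral_radius {..k+3} (Eb k) \<ge> lamb k"
  unfolding spectral_radius_def
  by (rule Max_ge[OF eig_finite]) (use book_eig[OF k] in auto)



lemma rho_bound:
  fixes V :: "nat set" and E :: "nat set set" and x :: "nat \<Rightarrow> real"
  assumes sg: "simple_graph V E" and pv: "perron_vector V E x" and u: "u \<in> V"
    and mx: "\<forall>v\<in>V. x v \<le> x u"
    and ind: "\<forall>v\<in>nbhd V E u. nbhd V E v \<inter> nbhd V E u = {}"
  shows "(spectral_radius V E)^2 \<le> real (card E)" "spectral_radius V E \<ge> 0"
proof -
  define r where "r = spectral_radius V E"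
  define N where "N = nbhd V E u"
  have fin: "finite V" using sg unfolding simple_graph_def by auto
  have finE: "finite E"
  proof -
    have "E \<subseteq> Pow V" using sg unfolding simple_graph_def by auto
    thus ?thesis using fin finite_subset by blast
  qed
  have pos: "\<forall>v\<in>V. x v > 0" using pv unfolding perron_vector_def by auto
  have eig: "r * x v = (\<Sum>w\<in>nbhd V E v. x w)" if "v \<in> V" for v
  proof -
    have "(\<Sum>w\<in>V. if {v, w} \<in> E then x w else 0) = r * x v"
      using pv that unfolding perron_vector_def adj_eigvec_def r_def by blast
    thus ?thesis unfolding nbhd_def by (simp add: sum.inter_filter[OF fin])
  qed
  have nbV: "nbhd V E v \<subseteq> V" for v unfolding nbhd_def by auto
  have finN: "finite (nbhd V E v)" for v using finite_subset[OF nbV fin] .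
  have xu: "x u > 0" using pos u by auto
  have "r * x u \<ge> 0" unfolding eig[OF u] using pos nbV by (intro sum_nonneg) (meson less_imp_le subsetD)
  hence r0: "r \<ge> 0" using xu by (simp add: zero_le_mult_iff)
  then show "spectral_radius V E \<ge> 0" unfolding r_def .
  have "r^2 * x u = r * (r * x u)" by (simp add: power2_eq_square)
  also have "\<dots> = (\<Sum>v\<in>N. r * x v)" unfolding eig[OF u] N_def by (simp add: sum_distrib_left)
  also have "\<dots> = (\<Sum>v\<in>N. \<Sum>w\<in>nbhd V E v. x w)"
    by (rule sum.cong) (use nbV eig in \<open>auto simp: N_def\<close>)
  also have "\<dots> \<le> (\<Sum>v\<in>N. \<Sum>w\<in>nbhd V E v. x u)"
    by (intro sum_mono) (use nbV mx in auto)
  also have "\<dots> = x u * real (card (Sigma N (nbhd V E)))"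
  proof -
    have fN: "finite N" unfolding N_def using finN .
    have "card (Sigma N (nbhd V E)) = (\<Sum>v\<in>N. card (nbhd V E v))"
      using card_SigmaI[of N "nbhd V E"] fN finN by blast
    thus ?thesis by (simp add: sum_distrib_left mult.commute)
  qed
  also have "\<dots> \<le> x u * real (card E)"
  proof -
    have "inj_on (\<lambda>(v,w). {v,w}) (Sigma N (nbhd V E))"
    proof (rule inj_onI, clarify)
      fix v w v' w'
      assume a: "v \<in> N" "w \<in> nbhd V E v" "v' \<in> N" "w' \<in> nbhd V E v'" and eq: "{v,w} = {v',w'}"
      show "v = v' \<and> w = w'"
      proof (cases "v = v'")
        case True thus ?thesis using eq by (auto simp: doubleton_eq_iff)
      next
        case False
        hence "w = v'" using eq by (auto simp: doubleton_eq_iff)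
        thus ?thesis using a ind unfolding N_def by blast
      qed
    qed
    moreover have "(\<lambda>(v,w). {v,w}) ` Sigma N (nbhd V E) \<subseteq> E" by (auto simp: nbhd_def)
    ultimately have "card (Sigma N (nbhd V E)) \<le> card E"
      using card_inj_on_le finE by blast
    thus ?thesis using xu by simp
  qed
  finally have "r^2 * x u \<le> real (card E) * x u" by (simp add: mult.commute)
  thus "(spectral_radius V E)^2 \<le> real (card E)" using xu unfolding r_def by simp
qed


theorem claim1:
  fixes m :: nat and V :: "nat set" and E :: "nat set set" and x :: "nat \<Rightarrow> real" and ustar :: nat
  assumes "even m" and "m \<ge> 38"
    and "simple_graph V E" and "card E = m" and "no_isolated V E" and "H43_free V E"
    and "\<forall>V' (E' :: nat set set). simple_graph V' E' \<and> card E' = m \<and> no_isolated V' E' \<and>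
            H43_free V' E' \<longrightarrow> spectral_radius V' E' \<le> spectral_radius V E"
    and "perron_vector V E x"
    and "ustar \<in> V" and "\<forall>v\<in>V. x v \<le> x ustar"
  shows "{v \<in> nbhd V E ustar. card (nbhd V E v \<inter> nbhd V E ustar) \<ge> 1} \<noteq> {}"
proof (rule ccontr)
  assume "\<not> ?thesis"
  hence emp: "\<forall>v\<in>nbhd V E ustar. card (nbhd V E v \<inter> nbhd V E ustar) = 0" by auto
  have fin: "finite V" using assms(3) unfolding simple_graph_def by auto
  have ind: "\<forall>v\<in>nbhd V E ustar. nbhd V E v \<inter> nbhd V E ustar = {}"
  proof
    fix v assume "v \<in> nbhd V E ustar"
    hence c: "card (nbhd V E v \<inter> nbhd V E ustar) = 0" using emp by auto
    have "finite (nbhd V E v \<inter> nbhd V E ustar)"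
      using fin by (rule finite_subset[rotated]) (auto simp: nbhd_def)
    thus "nbhd V E v \<inter> nbhd V E ustar = {}" using c by simp
  qed
  have rb: "(spectral_radius V E)^2 \<le> real (card E)" "spectral_radius V E \<ge> 0"
    using rho_bound[OF assms(3) assms(8) assms(9) assms(10) ind] by auto
  define k where "k = (m - 2) div 2"
  have mk: "m = 2*k+2" using assms(1,2) unfolding k_def by (auto elim!: evenE)
  have k2: "k \<ge> 2" using assms(2) mk by simp
  have "spectral_radius {..k+3} (Eb k) \<le> spectral_radius V E"
    using assms(7) simple_Eb[of k] card_Eb[of k] noiso_Eb[of k] h43_Eb[of k] mk by auto
  hence lr: "lamb k \<le> spectral_radius V E" using book_rho[OF k2] by linarith
  have l2: "lamb k > 2" and lsq: "(lamb k)^2 = lamb k + 2 * real k" using lamb_facts[OF k2] by auto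
  have "(lamb k)^2 \<le> (spectral_radius V E)^2" using lr l2 by (intro power_mono) auto
  hence "(lamb k)^2 \<le> real m" using rb assms(4) by simp
  thus False using lsq l2 mk by simp
qed

end
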